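(* Let $n=2p$ with $p$ a positive integer, $m$ a positive integer, and $s$ a real number with $0\le s\le p$. Define $$g(\alpha)=2\sum_{i=1}^p\Big(2i\alpha_i+m\big(\alpha_i+1-\tfrac{s}{p}\big)^+\Big)$$ on $\mathcal{P}=\{\alpha\in\mathbb{R}^p:\ \tfrac{s}{p}\ge\alpha_1\ge\cdots\ge\alpha_p,\ \sum_{i=1}^p\alpha_i=0\}$. If $m\ge 2(\lceil s\rceil-1)$, then $\min_{\alpha\in\mathcal{P}}g(\alpha)\ge d_2(s)$, where $d_2$ is the piecewise linear function connecting the points $(s,(n-2s)(m-s))$ for $s\in\mathbb{Z}$.
   Context: $(x)^+=\max(0,x)$. *)

theory Defs
  imports Complex_Main
begin

definition pos_part :: "real \<Rightarrow> real" where
  "pos_part x = max 0 x"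

definition d2_node :: "nat \<Rightarrow> nat \<Rightarrow> int \<Rightarrow> real" where
  "d2_node n m k = (real n - 2 * real_of_int k) * (real m - real_of_int k)"

definition d2 :: "nat \<Rightarrow> nat \<Rightarrow> real \<Rightarrow> real" where
  "d2 n m s = (let k = \<lfloor>s\<rfloor> in
     d2_node n m k + (s - real_of_int k) * (d2_node n m (k + 1) - d2_node n m k))"

definition g_fun :: "nat \<Rightarrow> nat \<Rightarrow> real \<Rightarrow> (nat \<Rightarrow> real) \<Rightarrow> real" where
  "g_fun p m s \<alpha> = 2 * (\<Sum>i=1..p. 2 * real i * \<alpha> i + real m * pos_part (\<alpha> i + 1 - s / real p))"

definition P_set :: "nat \<Rightarrow> real \<Rightarrow> (nat \<Rightarrow> real) set" where
  "P_set p s = {\<alpha>. s / real p \<ge> \<alpha> 1 \<and> (\<forall>i\<in>{1..<p}. \<alpha> i \<ge> \<alpha> (i + 1))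
                   \<and> (\<Sum>i=1..p. \<alpha> i) = 0}"

end

theory Submission
  imports Defs
begin

lemma abel_sum:
  fixes a :: "nat \<Rightarrow> real"
  shows "(\<Sum>i=1..N. real i * a i) = real N * (\<Sum>i=1..N. a i) - (\<Sum>k=1..<N. \<Sum>i=1..k. a i)"
proof (induction N)
  case 0 then show ?case by simp
next
  case (Suc N)
  show ?case
  proof (cases "N = 0")
    case True then show ?thesis by simp
  next
    case False
    have "(\<Sum>k=1..<Suc N. \<Sum>i=1..k. a i) = (\<Sum>k=1..<N. \<Sum>i=1..k. a i) + (\<Sum>i=1..N. a i)"
      using False by (subst sum.atLeastLessThan_Suc) auto
    then show ?thesis using Suc by (simp add: algebra_simps)
  qed
qed

lemma gauss_real: "(\<Sum>k=1..<q. real k) * 2 = real q * (real q - 1)"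
proof (induction q)
  case 0 then show ?case by simp
next
  case (Suc q)
  show ?case
  proof (cases "q = 0")
    case True then show ?thesis by simp
  next
    case False
    then have "(\<Sum>k=1..<Suc q. real k) = (\<Sum>k=1..<q. real k) + real q"
      by (subst sum.atLeastLessThan_Suc) auto
    then show ?thesis using Suc by (simp add: algebra_simps)
  qed
qed

lemma posL:
  fixes x :: real
  assumes "0 \<le> x" "x \<le> real q"
  shows "2 * (\<Sum>k=1..<q. pos_part (real k - real q + x))
       = real_of_int \<lfloor>x\<rfloor> * (real_of_int \<lfloor>x\<rfloor> - 1) + 2 * real_of_int \<lfloor>x\<rfloor> * (x - real_of_int \<lfloor>x\<rfloor>)"
  using assms
proof (induction q arbitrary: x)
  case 0 then show ?case by simp
next
  case (Suc q)
  have split: "(\<Sum>k=1..<Suc q. pos_part (real k - real (Suc q) + x))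
     = (\<Sum>k=1..<q. pos_part (real k - real q + (x - 1))) + pos_part (x - 1)"
  proof (cases "q = 0")
    case True then show ?thesis using Suc.prems by (simp add: pos_part_def)
  next
    case False
    then show ?thesis by (subst sum.atLeastLessThan_Suc) (auto simp: algebra_simps)
  qed
  show ?case
  proof (cases "x \<ge> 1")
    case True
    have IH: "2 * (\<Sum>k=1..<q. pos_part (real k - real q + (x - 1)))
       = real_of_int \<lfloor>x - 1\<rfloor> * (real_of_int \<lfloor>x - 1\<rfloor> - 1) + 2 * real_of_int \<lfloor>x - 1\<rfloor> * ((x - 1) - real_of_int \<lfloor>x - 1\<rfloor>)"
      using Suc.IH[of "x - 1"] Suc.prems True by simp
    have fl: "\<lfloor>x - 1\<rfloor> = \<lfloor>x\<rfloor> - 1" by (simp add: floor_diff_one)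
    have px: "pos_part (x - 1) = x - 1" using True by (simp add: pos_part_def)
    show ?thesis unfolding split distrib_left px IH fl
      by (simp add: algebra_simps)
  next
    case False
    have z: "(\<Sum>k=1..<q. pos_part (real k - real q + (x - 1))) = 0"
      by (rule sum.neutral) (use False in \<open>auto simp: pos_part_def\<close>)
    have fl: "\<lfloor>x\<rfloor> = 0" using False Suc.prems by (simp add: floor_eq_iff)
    show ?thesis using False unfolding split z by (simp add: fl pos_part_def)
  qed
qed

lemma card_bound:
  fixes s :: real
  assumes "0 \<le> s" "s \<le> real p"
  shows "card {k\<in>{1..<p}. real p - s < real k} \<le> nat \<lceil>s\<rceil> - 1"
proof -
  define c where "c = nat \<lceil>s\<rceil>"
  have "{k\<in>{1..<p}. real p - s < real k} \<subseteq> {p + 1 - c..<p}"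
  proof
    fix k assume k: "k \<in> {k\<in>{1..<p}. real p - s < real k}"
    have "real p - real c \<le> real p - s" using assms by (simp add: c_def)
    with k have "real p - real c < real k" by auto
    then have "p < k + c" by linarith
    with k show "k \<in> {p + 1 - c..<p}" by auto
  qed
  then have "card {k\<in>{1..<p}. real p - s < real k} \<le> card {p + 1 - c..<p}"
    by (rule card_mono[rotated]) simp
  also have "card {p + 1 - c..<p} \<le> c - 1" by simp
  finally show ?thesis by (simp add: c_def)
qed

lemma alpha_le:
  fixes \<alpha> :: "nat \<Rightarrow> real" and i :: nat
  assumes "\<forall>i\<in>{1..<p}. \<alpha> i \<ge> \<alpha> (i + 1)"
  shows "i \<in> {1..p} \<Longrightarrow> (\<alpha> i :: real) \<le> \<alpha> 1"
proof (induction i)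
  case 0 then show ?case by simp
next
  case (Suc i)
  show ?case
  proof (cases "i = 0")
    case True then show ?thesis by simp
  next
    case False
    then have "\<alpha> (Suc i) \<le> \<alpha> i" using assms Suc.prems by (auto)
    with Suc False show ?thesis by auto
  qed
qed

theorem mainTheorem6:
  fixes p m n :: nat and s :: real
  assumes "p > 0" and "m > 0" and "n = 2 * p"
    and "0 \<le> s" and "s \<le> real p"
    and "real m \<ge> 2 * (real_of_int \<lceil>s\<rceil> - 1)"
  shows "\<forall>\<alpha>\<in>P_set p s. g_fun p m s \<alpha> \<ge> d2 n m s"
proof
  fix \<alpha> assume "\<alpha> \<in> P_set p s"
  then have a1: "\<alpha> 1 \<le> s / real p" and chain: "\<forall>i\<in>{1..<p}. \<alpha> i \<ge> \<alpha> (i + 1)"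
    and sum0: "(\<Sum>i=1..p. \<alpha> i) = 0" unfolding P_set_def by auto
  define a where "a = s / real p"
  define S where "S k = (\<Sum>i=1..k. \<alpha> i)" for k
  define M where "M = (\<Sum>i=1..p. pos_part (\<alpha> i + 1 - a))"
  have ap: "a * real p = s" using assms(1) by (simp add: a_def)
  have g: "g_fun p m s \<alpha> = 2 * (2 * (\<Sum>i=1..p. real i * \<alpha> i) + real m * M)"
    unfolding g_fun_def M_def a_def
    by (simp add: sum.distrib sum_distrib_left mult.assoc)
  have I: "(\<Sum>i=1..p. real i * \<alpha> i) = - (\<Sum>k=1..<p. S k)"
    using abel_sum[of \<alpha> p] sum0 by (simp add: S_def)
  have Mk: "S k + real k * (1 - a) \<le> M" if "k \<le> p" for k
  proof -
    have "(\<Sum>i=1..k. \<alpha> i + 1 - a) = (\<Sum>i=1..k. \<alpha> i + (1 - a))"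
      by (simp add: algebra_simps)
    also have "\<dots> = S k + real k * (1 - a)"
      by (simp add: S_def sum.distrib)
    finally have "S k + real k * (1 - a) = (\<Sum>i=1..k. \<alpha> i + 1 - a)" by simp
    also have "\<dots> \<le> (\<Sum>i=1..k. pos_part (\<alpha> i + 1 - a))"
      by (rule sum_mono) (simp add: pos_part_def)
    also have "\<dots> \<le> M" unfolding M_def
      by (rule sum_mono2) (use that in \<open>auto simp: pos_part_def\<close>)
    finally show ?thesis .
  qed
  have Ska: "S k \<le> real k * a" if "k \<le> p" for k
  proof -
    have "S k \<le> (\<Sum>i=1..k. a)" unfolding S_def
      by (rule sum_mono) (use alpha_le[OF chain] that a1 in \<open>force simp: a_def\<close>)
    then show ?thesis by simp
  qed
  have Sk: "S k \<le> real k * a - pos_part (real k - M)" if "k \<le> p" for k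
    using Ska[OF that] Mk[OF that] by (auto simp: pos_part_def algebra_simps)
  have M0: "real p - s \<le> M" using Mk[of p] sum0 ap by (simp add: S_def algebra_simps)
  have sumS: "(\<Sum>k=1..<p. S k) \<le> (\<Sum>k=1..<p. real k * a - pos_part (real k - M))"
    by (rule sum_mono) (use Sk in auto)
  also have "\<dots> = a * (\<Sum>k=1..<p. real k) - (\<Sum>k=1..<p. pos_part (real k - M))"
    by (simp add: sum_subtractf sum_distrib_left mult.commute)
  finally have sumS1: "(\<Sum>k=1..<p. S k) \<le> a * (\<Sum>k=1..<p. real k) - (\<Sum>k=1..<p. pos_part (real k - M))" .
  have "2 * (a * (\<Sum>k=1..<p. real k)) = a * real p * (real p - 1)"
    using arg_cong[OF gauss_real[of p], of "\<lambda>t. a * t"] by (simp add: algebra_simps)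
  then have ga: "2 * (a * (\<Sum>k=1..<p. real k)) = s * (real p - 1)" using ap by simp
  have sumS': "2 * (\<Sum>k=1..<p. S k) \<le> s * (real p - 1) - 2 * (\<Sum>k=1..<p. pos_part (real k - M))"
    using sumS1 ga by linarith
  define M0 where "M0 = real p - s"
  define C where "C = card {k\<in>{1..<p}. real p - s < real k}"
  have Cb: "2 * real C \<le> real m"
  proof -
    have "C \<le> nat \<lceil>s\<rceil> - 1" using card_bound[OF assms(4,5)] by (simp add: C_def)
    then have "real C \<le> real (nat \<lceil>s\<rceil> - 1)" by simp
    also have "\<dots> \<le> max 0 (real_of_int \<lceil>s\<rceil> - 1)" by (simp add: of_nat_diff)
    finally show ?thesis using assms(6) assms(2) by (auto simp: max_def split: if_splits)
  qed
  have tmb: "pos_part (real k - M) - pos_part (real k - M0) \<ge> - (M - M0) * (if real p - s < real k then 1 else 0)" for k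
    using M0 by (auto simp: pos_part_def M0_def)
  have "(\<Sum>k=1..<p. pos_part (real k - M) - pos_part (real k - M0)) \<ge>
        (\<Sum>k=1..<p. - (M - M0) * (if real p - s < real k then 1 else 0))"
    by (rule sum_mono) (rule tmb)
  also have "(\<Sum>k=1..<p. - (M - M0) * (if real p - s < real k then 1 else 0)) = - (M - M0) * real C"
    by (simp add: sum_distrib_left[symmetric] C_def sum.If_cases Int_def conj_commute)
  finally have H: "(\<Sum>k=1..<p. pos_part (real k - M)) \<ge> (\<Sum>k=1..<p. pos_part (real k - M0)) - (M - M0) * real C"
    by (simp add: sum_subtractf algebra_simps)
  have MM: "(M - M0) * (2 * real C) \<le> (M - M0) * real m"
    using Cb M0 by (intro mult_left_mono) (auto simp: M0_def)
  have L: "2 * (\<Sum>k=1..<p. pos_part (real k - M0))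
       = real_of_int \<lfloor>s\<rfloor> * (real_of_int \<lfloor>s\<rfloor> - 1) + 2 * real_of_int \<lfloor>s\<rfloor> * (s - real_of_int \<lfloor>s\<rfloor>)"
    using posL[OF assms(4,5)] by (simp add: M0_def algebra_simps)
  have lower: "g_fun p m s \<alpha> \<ge> 2 * (real m * M0 - s * (real p - 1) + 2 * (\<Sum>k=1..<p. pos_part (real k - M0)))"
    unfolding g I using sumS' H MM by (simp add: algebra_simps)
  have d: "d2 n m s = 2 * (real m * M0 - s * (real p - 1) + 2 * (\<Sum>k=1..<p. pos_part (real k - M0)))"
    unfolding d2_def d2_node_def Let_def assms(3) M0_def
    using L unfolding M0_def by (simp add: algebra_simps)
  show "g_fun p m s \<alpha> \<ge> d2 n m s" using lower d by simp
qed

end
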